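(* Let $r,s$ be real numbers with $s, r^2 \in \mathbb{Q}$ and $s \geq 3\sqrt{3}\, r > 0$. Let $C_{r,s}$ be the plane curve $$C_{r,s}\colon\ s(xy - r^2) = x^2 y + x y^2 .$$ Then the assignment $$(x_0,y_0) \mapsto (x_0+y_0,\ s-x_0,\ s-y_0)$$ is a bijection from the set of rational points $(x_0,y_0) \in \mathbb{Q}^2$ on $C_{r,s}$ with $x_0>0$ and $y_0>0$ onto the set of ordered triples $(\ell_1,\ell_2,\ell_3)$ of side lengths of rational Euclidean triangles having semiperimeter $s$ and inradius $r$.
   Context: A Euclidean triangle is called rational if its three side lengths $\ell_1,\ell_2,\ell_3$ are rational numbers. Its semiperimeter is $s=(\ell_1+\ell_2+\ell_3)/2$ and its inradius $r$ is the radius of its inscribed circle. "Sequences of side lengths" means ordered triples $(\ell_1,\ell_2,\ell_3)$ of positive reals that are the side lengths of a (nondegenerate) triangle. *)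

theory Defs
  imports Complex_Main
begin

definition is_triangle :: "real \<times> real \<times> real \<Rightarrow> bool" where
  "is_triangle t = (case t of (a, b, c) \<Rightarrow>
     a > 0 \<and> b > 0 \<and> c > 0 \<and> a < b + c \<and> b < a + c \<and> c < a + b)"

definition rational_triangle :: "real \<times> real \<times> real \<Rightarrow> bool" where
  "rational_triangle t = (is_triangle t \<and>
     (case t of (a, b, c) \<Rightarrow> a \<in> \<rat> \<and> b \<in> \<rat> \<and> c \<in> \<rat>))"

definition semiperimeter :: "real \<times> real \<times> real \<Rightarrow> real" where
  "semiperimeter t = (case t of (a, b, c) \<Rightarrow> (a + b + c) / 2)"

definition tri_area :: "real \<times> real \<times> real \<Rightarrow> real" where
  "tri_area t = (case t of (a, b, c) \<Rightarrow>
     (let p = (a + b + c) / 2 in sqrt (p * (p - a) * (p - b) * (p - c))))"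

definition inradius :: "real \<times> real \<times> real \<Rightarrow> real" where
  "inradius t = tri_area t / semiperimeter t"

end

theory Submission
  imports Defs
begin

lemma key:
  fixes r s x y :: real
  assumes s: "s > 0" and r: "r > 0" and x: "x > 0" and y: "y > 0" and sxy: "s - x - y > 0"
  shows "inradius (x + y, s - x, s - y) = r \<longleftrightarrow> s * (x * y - r ^ 2) = x ^ 2 * y + x * y ^ 2"
proof -
  have p: "(x + y + (s - x) + (s - y)) / 2 = s" by simp
  have ir: "inradius (x + y, s - x, s - y) = sqrt (s * (s - x - y) * x * y) / s"
  proof -
    have e: "s * (s - (x + y)) * (s - (s - x)) * (s - (s - y)) = s * (s - x - y) * x * y" by simp
    show ?thesis
      unfolding inradius_def tri_area_def semiperimeter_def Let_def p
      by (simp only: prod.case p e)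
  qed
  have nn: "s * (s - x - y) * x * y \<ge> 0" using s x y sxy by simp
  have "sqrt (s * (s - x - y) * x * y) / s = r \<longleftrightarrow> sqrt (s * (s - x - y) * x * y) = r * s"
    using s by (simp add: field_simps)
  also have "\<dots> \<longleftrightarrow> s * (s - x - y) * x * y = (r * s)^2"
    using nn r s by (metis mult_pos_pos less_le real_sqrt_pow2 real_sqrt_unique)
  also have "\<dots> \<longleftrightarrow> s * ((s - x - y) * x * y) = s * (r^2 * s)"
    by (simp add: power2_eq_square mult.assoc mult.left_commute)
  also have "\<dots> \<longleftrightarrow> (s - x - y) * x * y = r^2 * s"
    using s by simp
  also have "\<dots> \<longleftrightarrow> s * (x * y - r ^ 2) = x ^ 2 * y + x * y ^ 2"
    by (simp add: power2_eq_square algebra_simps)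
  finally show ?thesis using ir by simp
qed

theorem theorem1:
  fixes r s :: real
  assumes "s \<in> \<rat>" and "r ^ 2 \<in> \<rat>" and "s \<ge> 3 * sqrt 3 * r" and "r > 0"
  shows "bij_betw (\<lambda>(x, y). (x + y, s - x, s - y))
           {(x, y). x \<in> \<rat> \<and> y \<in> \<rat> \<and> x > 0 \<and> y > 0 \<and>
                    s * (x * y - r ^ 2) = x ^ 2 * y + x * y ^ 2}
           {t. rational_triangle t \<and> semiperimeter t = s \<and> inradius t = r}"
proof -
  have s: "s > 0" using assms(3,4) by (smt (verit) mult_pos_pos real_sqrt_gt_0_iff)
  have curve_lt: "s - x - y > 0" if "x > 0" "y > 0" "s * (x * y - r ^ 2) = x ^ 2 * y + x * y ^ 2"
    for x y :: real
  proof -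
    have "x * y * (s - x - y) = s * r^2" using that(3) by (simp add: power2_eq_square algebra_simps)
    moreover have "s * r^2 > 0" using s assms(4) by simp
    ultimately have "x * y * (s - x - y) > 0" by simp
    moreover have "x * y > 0" using that by simp
    ultimately show ?thesis by (simp add: zero_less_mult_iff)
  qed
  show ?thesis
    unfolding bij_betw_def
  proof
    show "inj_on (\<lambda>(x, y). (x + y, s - x, s - y)) {(x, y). x \<in> \<rat> \<and> y \<in> \<rat> \<and> x > 0 \<and> y > 0 \<and>
                    s * (x * y - r ^ 2) = x ^ 2 * y + x * y ^ 2}"
      by (auto simp: inj_on_def)
  next
    show "(\<lambda>(x, y). (x + y, s - x, s - y)) ` {(x, y). x \<in> \<rat> \<and> y \<in> \<rat> \<and> x > 0 \<and> y > 0 \<and>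
                    s * (x * y - r ^ 2) = x ^ 2 * y + x * y ^ 2} =
          {t. rational_triangle t \<and> semiperimeter t = s \<and> inradius t = r}"
    proof (intro equalityI subsetI)
      fix t assume "t \<in> (\<lambda>(x, y). (x + y, s - x, s - y)) ` {(x, y). x \<in> \<rat> \<and> y \<in> \<rat> \<and> x > 0 \<and> y > 0 \<and>
                    s * (x * y - r ^ 2) = x ^ 2 * y + x * y ^ 2}"
      then obtain x y where t: "t = (x + y, s - x, s - y)" and q: "x \<in> \<rat>" "y \<in> \<rat>"
        and xy: "x > 0" "y > 0" and c: "s * (x * y - r ^ 2) = x ^ 2 * y + x * y ^ 2" by auto
      have lt: "s - x - y > 0" using curve_lt xy c by blast
      have "inradius t = r" using key[OF s assms(4) xy lt] c t by simp
      moreover have "rational_triangle t" unfolding t rational_triangle_def is_triangle_def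
        using xy lt q assms(1) by auto
      moreover have "semiperimeter t = s" unfolding t semiperimeter_def by simp
      ultimately show "t \<in> {t. rational_triangle t \<and> semiperimeter t = s \<and> inradius t = r}" by simp
    next
      fix t assume "t \<in> {t. rational_triangle t \<and> semiperimeter t = s \<and> inradius t = r}"
      then obtain a b c where t: "t = (a, b, c)" and tri: "rational_triangle (a, b, c)"
        and sp: "semiperimeter (a, b, c) = s" and ir: "inradius (a, b, c) = r"
        by (cases t) auto
      define x where "x = s - b"
      define y where "y = s - c"
      have h: "a > 0" "b > 0" "c > 0" "a < b + c" "b < a + c" "c < a + b" "a \<in> \<rat>" "b \<in> \<rat>" "c \<in> \<rat>"
        using tri unfolding rational_triangle_def is_triangle_def by auto
      have sv: "s = (a + b + c) / 2" using sp unfolding semiperimeter_def by simp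
      have xy: "x > 0" "y > 0" "s - x - y > 0" using h sv unfolding x_def y_def by auto
      have ta: "t = (x + y, s - x, s - y)" unfolding t x_def y_def sv by (simp add: field_simps)
      have q: "x \<in> \<rat>" "y \<in> \<rat>" using h assms(1) unfolding x_def y_def by auto
      have "s * (x * y - r ^ 2) = x ^ 2 * y + x * y ^ 2"
        using key[OF s assms(4) xy] ir t ta by simp
      then show "t \<in> (\<lambda>(x, y). (x + y, s - x, s - y)) ` {(x, y). x \<in> \<rat> \<and> y \<in> \<rat> \<and> x > 0 \<and> y > 0 \<and>
                    s * (x * y - r ^ 2) = x ^ 2 * y + x * y ^ 2}"
        using ta q xy by (auto intro!: image_eqI[where x="(x, y)"])
    qed
  qed
qed

end
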